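(* Let $\mathcal{S}\subseteq 2^{[n]}$ be a Sperner family and let $A\subseteq[n]$ be a fixed set. Define $h_A:\mathcal{S}\to 2^{[n]}$ by $h_A(S)=S\cap A$. Then $\mathcal{F}(\mathcal{S},h_A)$ is s-extremal. Moreover, if $\mathcal{F}(\mathcal{S},h_A)\neq 2^{[n]}$, then there exists a set $F\subseteq[n]$ with $F\notin\mathcal{F}(\mathcal{S},h_A)$ such that $\mathcal{F}'=\mathcal{F}(\mathcal{S},h_A)\cup\{F\}$ is again s-extremal, and furthermore $\mathcal{F}'=\mathcal{F}(\mathcal{S}',h_A)$ for some suitable Sperner family $\mathcal{S}'\subseteq 2^{[n]}$ (where $h_A(S)=S\cap A$ on $\mathcal{S}'$).
   Context: $[n]=\{1,\dots,n\}$. A family $\mathcal{S}\subseteq 2^{[n]}$ is a Sperner family if no member is contained in another member. A family $\mathcal{F}\subseteq 2^{[n]}$ shatters $S\subseteq[n]$ if $\{F\cap S: F\in\mathcal{F}\}=2^S$; $\mathrm{Sh}(\mathcal{F})$ denotes the family of sets shattered by $\mathcal{F}$. $\mathcal{F}$ is s-extremal if $|\mathrm{Sh}(\mathcal{F})|=|\mathcal{F}|$. For $H\subseteq S\subseteq[n]$ let $\mathcal{Q}_{S,H}=\{H\cup B: B\subseteq [n]\setminus S\}$ (the sets whose intersection with $S$ is $H$). For a Sperner family $\mathcal{S}$ and a function $h:\mathcal{S}\to 2^{[n]}$ with $h(S)\subseteq S$ for all $S\in\mathcal{S}$, put $\mathcal{F}(\mathcal{S},h)=2^{[n]}\setminus\bigcup_{S\in\mathcal{S}}\mathcal{Q}_{S,h(S)}$.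 *)

theory Defs
  imports Main
begin

definition sperner :: "nat set set \<Rightarrow> bool" where
  "sperner \<S> \<longleftrightarrow> (\<forall>S\<in>\<S>. \<forall>T\<in>\<S>. S \<subseteq> T \<longrightarrow> S = T)"

definition shatters :: "nat set set \<Rightarrow> nat set \<Rightarrow> bool" where
  "shatters \<F> S \<longleftrightarrow> (\<lambda>F. F \<inter> S) ` \<F> = Pow S"

definition Sh :: "nat \<Rightarrow> nat set set \<Rightarrow> nat set set" where
  "Sh n \<F> = {S. S \<subseteq> {1..n} \<and> shatters \<F> S}"

definition s_extremal :: "nat \<Rightarrow> nat set set \<Rightarrow> bool" where
  "s_extremal n \<F> \<longleftrightarrow> card (Sh n \<F>) = card \<F>"

definition Q :: "nat \<Rightarrow> nat set \<Rightarrow> nat set \<Rightarrow> nat set set" where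
  "Q n S H = {H \<union> B | B. B \<subseteq> {1..n} - S}"

definition FF :: "nat \<Rightarrow> nat set set \<Rightarrow> (nat set \<Rightarrow> nat set) \<Rightarrow> nat set set" where
  "FF n \<S> h = Pow {1..n} - (\<Union>S\<in>\<S>. Q n S (h S))"

end

theory Submission
  imports Defs
begin

definition sd :: "nat set \<Rightarrow> nat set \<Rightarrow> nat set" where
  "sd C X = (X - C) \<union> (C - X)"

lemma sd_sd[simp]: "sd C (sd C X) = X"
  unfolding sd_def by blast

lemma sd_inj: "inj_on (sd C) F"
  by (metis inj_onI sd_sd)

lemma sd_img_img[simp]: "sd C ` sd C ` F = F"
  by (force simp: image_iff)

lemma shatters_sd1:
  assumes "shatters F S" shows "shatters (sd C ` F) S"
  unfolding shatters_def
proof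
  show "(\<lambda>F. F \<inter> S) ` sd C ` F \<subseteq> Pow S" by auto
  show "Pow S \<subseteq> (\<lambda>F. F \<inter> S) ` sd C ` F"
  proof
    fix T assume T: "T \<in> Pow S"
    have "sd (C \<inter> S) T \<in> Pow S" using T unfolding sd_def by auto
    then obtain X where X: "X \<in> F" "X \<inter> S = sd (C \<inter> S) T"
      using assms unfolding shatters_def by (metis imageE)
    have "sd C X \<inter> S = T" using X(2) T unfolding sd_def by blast
    then show "T \<in> (\<lambda>F. F \<inter> S) ` sd C ` F" using X(1) by blast
  qed
qed

lemma Sh_sd: "Sh n (sd C ` F) = Sh n F"
  unfolding Sh_def using shatters_sd1[of "sd C ` F" _ C] shatters_sd1[of F _ C]
  by auto

lemma card_sd: "card (sd C ` F) = card F"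
  by (simp add: card_image sd_inj)

lemma downset_Sh:
  assumes "D \<subseteq> Pow {1..n}" "\<And>X Y. X \<in> D \<Longrightarrow> Y \<subseteq> X \<Longrightarrow> Y \<in> D"
  shows "Sh n D = D"
proof
  show "Sh n D \<subseteq> D"
  proof
    fix S assume "S \<in> Sh n D"
    then have "S \<in> (\<lambda>F. F \<inter> S) ` D" unfolding Sh_def shatters_def by auto
    then obtain X where "X \<in> D" "S = X \<inter> S" by auto
    then show "S \<in> D" using assms(2) by blast
  qed
  show "D \<subseteq> Sh n D"
  proof
    fix Z assume Z: "Z \<in> D"
    have "(\<lambda>F. F \<inter> Z) ` D = Pow Z"
    proof
      show "(\<lambda>F. F \<inter> Z) ` D \<subseteq> Pow Z" by auto
      show "Pow Z \<subseteq> (\<lambda>F. F \<inter> Z) ` D"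
      proof
        fix T assume "T \<in> Pow Z"
        then have "T \<in> D" "T = T \<inter> Z" using assms(2) Z by auto
        then show "T \<in> (\<lambda>F. F \<inter> Z) ` D" by blast
      qed
    qed
    then show "Z \<in> Sh n D" using Z assms(1) unfolding Sh_def shatters_def by auto
  qed
qed

lemma Q_char:
  assumes "S \<subseteq> {1..n}" "H \<subseteq> S"
  shows "Q n S H = {X. X \<subseteq> {1..n} \<and> X \<inter> S = H}"
proof
  show "Q n S H \<subseteq> {X. X \<subseteq> {1..n} \<and> X \<inter> S = H}"
    unfolding Q_def using assms by blast
  show "{X. X \<subseteq> {1..n} \<and> X \<inter> S = H} \<subseteq> Q n S H"
  proof
    fix X assume "X \<in> {X. X \<subseteq> {1..n} \<and> X \<inter> S = H}"
    then have "X = H \<union> (X - S)" "X - S \<subseteq> {1..n} - S" by auto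
    then show "X \<in> Q n S H" unfolding Q_def by blast
  qed
qed

definition DD :: "nat \<Rightarrow> nat set set \<Rightarrow> nat set set" where
  "DD n \<S> = {Z. Z \<subseteq> {1..n} \<and> (\<forall>S\<in>\<S>. \<not> S \<subseteq> Z)}"

lemma FF_eq:
  assumes "\<S> \<subseteq> Pow {1..n}" "A \<subseteq> {1..n}"
  shows "FF n \<S> (\<lambda>S. S \<inter> A) = sd ({1..n} - A) ` DD n \<S>"
proof -
  have Q: "\<And>S. S \<in> \<S> \<Longrightarrow> Q n S (S \<inter> A) = {X. X \<subseteq> {1..n} \<and> X \<inter> S = S \<inter> A}"
    using assms by (intro Q_char) auto
  have F: "FF n \<S> (\<lambda>S. S \<inter> A) = {X. X \<subseteq> {1..n} \<and> (\<forall>S\<in>\<S>. X \<inter> S \<noteq> S \<inter> A)}"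
    unfolding FF_def using Q by auto
  have key: "\<And>X S. X \<subseteq> {1..n} \<Longrightarrow> S \<subseteq> {1..n} \<Longrightarrow>
      (X \<inter> S = S \<inter> A) = (S \<subseteq> sd ({1..n} - A) X)"
    unfolding sd_def by blast
  have sub: "\<And>X. X \<subseteq> {1..n} \<Longrightarrow> sd ({1..n} - A) X \<subseteq> {1..n}"
    unfolding sd_def by blast
  have "sd ({1..n} - A) ` FF n \<S> (\<lambda>S. S \<inter> A) = DD n \<S>"
  proof
    show "sd ({1..n} - A) ` FF n \<S> (\<lambda>S. S \<inter> A) \<subseteq> DD n \<S>"
    proof
      fix Z assume "Z \<in> sd ({1..n} - A) ` FF n \<S> (\<lambda>S. S \<inter> A)"
      then obtain X where X: "X \<subseteq> {1..n}" "\<forall>S\<in>\<S>. X \<inter> S \<noteq> S \<inter> A"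
        "Z = sd ({1..n} - A) X" unfolding F by blast
      have "\<forall>S\<in>\<S>. \<not> S \<subseteq> Z"
      proof
        fix S assume S: "S \<in> \<S>"
        then have "S \<subseteq> {1..n}" using assms(1) by auto
        then have "(X \<inter> S = S \<inter> A) = (S \<subseteq> sd ({1..n} - A) X)" using key[OF X(1)] by blast
        then show "\<not> S \<subseteq> Z" using X(2,3) S by blast
      qed
      then show "Z \<in> DD n \<S>" unfolding DD_def using sub[OF X(1)] X(3) by simp
    qed
    show "DD n \<S> \<subseteq> sd ({1..n} - A) ` FF n \<S> (\<lambda>S. S \<inter> A)"
    proof
      fix Z assume Z: "Z \<in> DD n \<S>"
      let ?X = "sd ({1..n} - A) Z"
      have Z1: "Z \<subseteq> {1..n}" "\<forall>S\<in>\<S>. \<not> S \<subseteq> Z" using Z unfolding DD_def by auto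
      have "\<forall>S\<in>\<S>. ?X \<inter> S \<noteq> S \<inter> A"
      proof
        fix S assume S: "S \<in> \<S>"
        then have "S \<subseteq> {1..n}" using assms(1) by auto
        then have "(?X \<inter> S = S \<inter> A) = (S \<subseteq> sd ({1..n} - A) ?X)" using key[OF sub[OF Z1(1)]] by blast
        then show "?X \<inter> S \<noteq> S \<inter> A" using Z1(2) S by simp
      qed
      then have "?X \<in> FF n \<S> (\<lambda>S. S \<inter> A)"
        unfolding F using sub[OF Z1(1)] by simp
      moreover have "Z = sd ({1..n} - A) ?X" by simp
      ultimately show "Z \<in> sd ({1..n} - A) ` FF n \<S> (\<lambda>S. S \<inter> A)" by blast
    qed
  qed
  then show ?thesis by (metis sd_img_img)
qed

definition minS :: "nat \<Rightarrow> nat set set \<Rightarrow> nat set set" where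
  "minS n D = {M. M \<subseteq> {1..n} \<and> M \<notin> D \<and> (\<forall>Y. Y \<subset> M \<longrightarrow> Y \<in> D)}"

lemma minS_props:
  assumes "D \<subseteq> Pow {1..n}" "\<And>X Y. X \<in> D \<Longrightarrow> Y \<subseteq> X \<Longrightarrow> Y \<in> D"
  shows "minS n D \<subseteq> Pow {1..n}" "sperner (minS n D)" "DD n (minS n D) = D"
proof -
  show "minS n D \<subseteq> Pow {1..n}" unfolding minS_def by auto
  show "sperner (minS n D)" unfolding sperner_def
  proof (intro ballI impI)
    fix S T assume S: "S \<in> minS n D" and T: "T \<in> minS n D" and ST: "S \<subseteq> T"
    show "S = T"
    proof (rule ccontr)
      assume "S \<noteq> T"
      then have "S \<subset> T" using ST by auto
      then have "S \<in> D" using T unfolding minS_def by auto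
      then show False using S unfolding minS_def by auto
    qed
  qed
  show "DD n (minS n D) = D"
  proof
    show "DD n (minS n D) \<subseteq> D"
    proof
      fix Z assume Z: "Z \<in> DD n (minS n D)"
      show "Z \<in> D"
      proof (rule ccontr)
        assume nZ: "Z \<notin> D"
        have fin: "finite {W. W \<subseteq> Z \<and> W \<notin> D}"
        proof (rule finite_subset[of _ "Pow Z"])
          show "{W. W \<subseteq> Z \<and> W \<notin> D} \<subseteq> Pow Z" by auto
          have "Z \<subseteq> {1..n}" using Z unfolding DD_def by auto
          then have "finite Z" using finite_subset by blast
          then show "finite (Pow Z)" by simp
        qed
        have ne: "{W. W \<subseteq> Z \<and> W \<notin> D} \<noteq> {}" using nZ by auto
        obtain M where M: "M \<in> {W. W \<subseteq> Z \<and> W \<notin> D}"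
          "\<forall>b\<in>{W. W \<subseteq> Z \<and> W \<notin> D}. b \<le> M \<longrightarrow> M = b"
          using finite_has_minimal[OF fin ne] by blast
        have "M \<in> minS n D"
        proof -
          have "\<forall>Y. Y \<subset> M \<longrightarrow> Y \<in> D"
          proof (intro allI impI)
            fix Y assume Y: "Y \<subset> M"
            show "Y \<in> D"
            proof (rule ccontr)
              assume "Y \<notin> D"
              then have "Y \<in> {W. W \<subseteq> Z \<and> W \<notin> D}" using Y M(1) by auto
              then have "M = Y" using M(2) Y by blast
              then show False using Y by auto
            qed
          qed
          then show ?thesis unfolding minS_def using M Z unfolding DD_def by auto
        qed
        then show False using Z M unfolding DD_def by auto
      qed
    qed
    show "D \<subseteq> DD n (minS n D)"
    proof
      fix Z assume Z: "Z \<in> D"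
      have "\<forall>S\<in>minS n D. \<not> S \<subseteq> Z"
      proof (intro ballI notI)
        fix S assume "S \<in> minS n D" "S \<subseteq> Z"
        then show False using assms(2)[OF Z] unfolding minS_def by auto
      qed
      then show "Z \<in> DD n (minS n D)" using Z assms(1) unfolding DD_def by auto
    qed
  qed
qed

theorem theorem9:
  fixes n :: nat and \<S> :: "nat set set" and A :: "nat set"
  assumes "\<S> \<subseteq> Pow {1..n}" and "sperner \<S>" and "A \<subseteq> {1..n}"
  shows "s_extremal n (FF n \<S> (\<lambda>S. S \<inter> A)) \<and>
    (FF n \<S> (\<lambda>S. S \<inter> A) \<noteq> Pow {1..n} \<longrightarrow>
      (\<exists>F. F \<subseteq> {1..n} \<and> F \<notin> FF n \<S> (\<lambda>S. S \<inter> A) \<and>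
         s_extremal n (FF n \<S> (\<lambda>S. S \<inter> A) \<union> {F}) \<and>
         (\<exists>\<S>'. \<S>' \<subseteq> Pow {1..n} \<and> sperner \<S>' \<and>
            FF n \<S> (\<lambda>S. S \<inter> A) \<union> {F} = FF n \<S>' (\<lambda>S. S \<inter> A))))"
proof -
  let ?C = "{1..n} - A"
  let ?F = "FF n \<S> (\<lambda>S. S \<inter> A)"
  let ?D = "DD n \<S>"
  have FD: "?F = sd ?C ` ?D" by (rule FF_eq[OF assms(1,3)])
  have Dsub: "?D \<subseteq> Pow {1..n}" unfolding DD_def by auto
  have Ddown: "\<And>X Y. X \<in> ?D \<Longrightarrow> Y \<subseteq> X \<Longrightarrow> Y \<in> ?D" unfolding DD_def by blast
  have ext: "\<And>D. D \<subseteq> Pow {1..n} \<Longrightarrow> (\<And>X Y. X \<in> D \<Longrightarrow> Y \<subseteq> X \<Longrightarrow> Y \<in> D)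
      \<Longrightarrow> s_extremal n (sd ?C ` D)"
    unfolding s_extremal_def by (simp add: Sh_sd card_sd downset_Sh)
  have part1: "s_extremal n ?F" using FD ext[OF Dsub Ddown] by simp
  have part2: "\<exists>F. F \<subseteq> {1..n} \<and> F \<notin> ?F \<and> s_extremal n (?F \<union> {F}) \<and>
         (\<exists>\<S>'. \<S>' \<subseteq> Pow {1..n} \<and> sperner \<S>' \<and> ?F \<union> {F} = FF n \<S>' (\<lambda>S. S \<inter> A))"
    if ne: "?F \<noteq> Pow {1..n}"
  proof -
    have "?F \<subseteq> Pow {1..n}" unfolding FF_def by auto
    then obtain X where X: "X \<subseteq> {1..n}" "X \<notin> ?F" using ne by blast
    have "sd ?C X \<notin> ?D"
    proof
      assume "sd ?C X \<in> ?D"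
      then have "sd ?C (sd ?C X) \<in> sd ?C ` ?D" by (rule imageI)
      then have a: "X \<in> sd ?C ` ?D" by (simp only: sd_sd)
      have b: "X \<notin> sd ?C ` ?D" using FD X(2) by (rule subst)
      from b a show False by (rule notE)
    qed
    moreover have "sd ?C X \<subseteq> {1..n}" using X(1) unfolding sd_def by blast
    ultimately have ne2: "Pow {1..n} - ?D \<noteq> {}" by blast
    have fin: "finite (Pow {1..n} - ?D)" by simp
    obtain M where M: "M \<in> Pow {1..n} - ?D" "\<forall>b\<in>Pow {1..n} - ?D. b \<le> M \<longrightarrow> M = b"
      using finite_has_minimal[OF fin ne2] by blast
    define D' where "D' = insert M ?D"
    have D'sub: "D' \<subseteq> Pow {1..n}" using M Dsub unfolding D'_def by auto
    have D'down: "Y \<in> D'" if "X' \<in> D'" "Y \<subseteq> X'" for X' Y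
    proof (cases "X' = M")
      case True
      show ?thesis
      proof (rule ccontr)
        assume nY: "Y \<notin> D'"
        then have "Y \<in> Pow {1..n} - ?D" using that(2) True M(1) unfolding D'_def by auto
        then have "M = Y" using M(2) that(2) True by blast
        then show False using nY unfolding D'_def by simp
      qed
    next
      case False
      then show ?thesis using that Ddown unfolding D'_def by auto
    qed
    have eq: "?F \<union> {sd ?C M} = sd ?C ` D'" unfolding D'_def FD image_insert by blast
    have r1: "sd ?C M \<subseteq> {1..n}" using M unfolding sd_def by auto
    have r2: "sd ?C M \<notin> ?F"
    proof
      assume "sd ?C M \<in> ?F"
      then have "sd ?C M \<in> sd ?C ` ?D" by (simp only: FD)
      then obtain Z where Z: "Z \<in> ?D" "sd ?C M = sd ?C Z" by (rule imageE) simp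
      then have "sd ?C (sd ?C M) = sd ?C (sd ?C Z)" by simp
      then have "M = Z" by simp
      then show False using Z(1) M(1) by simp
    qed
    have r3: "s_extremal n (?F \<union> {sd ?C M})" using eq ext[OF D'sub D'down] by simp
    have r4: "?F \<union> {sd ?C M} = FF n (minS n D') (\<lambda>S. S \<inter> A)"
      using eq FF_eq[OF minS_props(1)[OF D'sub D'down] assms(3)] minS_props(3)[OF D'sub D'down]
      by simp
    have r5: "minS n D' \<subseteq> Pow {1..n}" "sperner (minS n D')"
      using minS_props(1,2)[OF D'sub D'down] by auto
    show ?thesis
      apply (rule exI[of _ "sd ?C M"])
      apply (intro conjI r1 r2 r3)
      apply (rule exI[of _ "minS n D'"])
      apply (intro conjI r5 r4)
      done
  qed
  show ?thesis using part1 part2 by blast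
qed

end
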